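(* Let $V$ be a vector space of dimension $2r$ ($r\ge1$) over $\mathbb{F}_2$ with nondegenerate quadratic form $Q$, and suppose $V$ has a symmetric basis. (i) If $r\equiv 0$ or $1\pmod 4$, then $Q$ is hyperbolic. (ii) If $r\equiv 2$ or $3\pmod 4$, then $Q$ is elliptic.
   Context: The associated bilinear form of $Q$ is $B(u,v)=Q(u+v)-Q(u)-Q(v)$, and $Q$ is nondegenerate if $B$ is. $Q$ is hyperbolic if $V$ has a basis $e_1,\dots,e_r,f_1,\dots,f_r$ with $Q(e_i)=Q(f_i)=0$, $B(e_i,e_j)=B(f_i,f_j)=0$, $B(e_i,f_j)=\delta_{ij}$; it is elliptic if $V$ has a basis $e_1,\dots,e_{r-1},f_1,\dots,f_{r-1},x,y$ with the same relations among the $e_i,f_i$, all $e_i,f_i$ orthogonal to $x,y$, $Q(x)=Q(y)=1$, $B(x,y)=1$. (Every nondegenerate quadratic form on $\mathbb{F}_2^{2r}$ is exactly one of these.) A basis $\{v_1,\dots,v_{2r}\}$ is symmetric if $Q(v_i)=0$ for all $i$ and $B(v_i,v_j)=1$ for all $i\ne j$. *)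

theory Defs
  imports Main "HOL.Vector_Spaces" "HOL-Library.Z2"
begin

definition assoc_bilin :: "('v::ab_group_add \<Rightarrow> bit) \<Rightarrow> 'v \<Rightarrow> 'v \<Rightarrow> bit" where
  "assoc_bilin Q u v = Q (u + v) - Q u - Q v"

definition quadratic_form :: "(bit \<Rightarrow> 'v::ab_group_add \<Rightarrow> 'v) \<Rightarrow> ('v \<Rightarrow> bit) \<Rightarrow> bool" where
  "quadratic_form scale Q \<longleftrightarrow>
     (\<forall>a v. Q (scale a v) = a^2 * Q v) \<and>
     (\<forall>u v w. assoc_bilin Q (u + v) w = assoc_bilin Q u w + assoc_bilin Q v w) \<and>
     (\<forall>a u w. assoc_bilin Q (scale a u) w = a * assoc_bilin Q u w)"

definition nondegenerate :: "('v::ab_group_add \<Rightarrow> bit) \<Rightarrow> bool" where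
  "nondegenerate Q \<longleftrightarrow> (\<forall>u. (\<forall>v. assoc_bilin Q u v = 0) \<longrightarrow> u = 0)"

definition is_basis :: "(bit \<Rightarrow> 'v::ab_group_add \<Rightarrow> 'v) \<Rightarrow> 'v set \<Rightarrow> bool" where
  "is_basis scale S \<longleftrightarrow> \<not> module.dependent scale S \<and> module.span scale S = UNIV"

definition has_symmetric_basis :: "(bit \<Rightarrow> 'v::ab_group_add \<Rightarrow> 'v) \<Rightarrow> ('v \<Rightarrow> bit) \<Rightarrow> nat \<Rightarrow> bool" where
  "has_symmetric_basis scale Q r \<longleftrightarrow>
     (\<exists>v :: nat \<Rightarrow> 'v. inj_on v {..<2*r} \<and> is_basis scale (v ` {..<2*r}) \<and>
        (\<forall>i<2*r. Q (v i) = 0) \<and>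
        (\<forall>i<2*r. \<forall>j<2*r. i \<noteq> j \<longrightarrow> assoc_bilin Q (v i) (v j) = 1))"

definition hyperbolic :: "(bit \<Rightarrow> 'v::ab_group_add \<Rightarrow> 'v) \<Rightarrow> ('v \<Rightarrow> bit) \<Rightarrow> nat \<Rightarrow> bool" where
  "hyperbolic scale Q r \<longleftrightarrow>
     (\<exists>e f :: nat \<Rightarrow> 'v.
        card (e ` {..<r} \<union> f ` {..<r}) = 2*r \<and>
        is_basis scale (e ` {..<r} \<union> f ` {..<r}) \<and>
        (\<forall>i<r. Q (e i) = 0 \<and> Q (f i) = 0) \<and>
        (\<forall>i<r. \<forall>j<r. assoc_bilin Q (e i) (e j) = 0 \<and> assoc_bilin Q (f i) (f j) = 0 \<and>
                      assoc_bilin Q (e i) (f j) = (if i = j then 1 else 0)))"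

definition elliptic :: "(bit \<Rightarrow> 'v::ab_group_add \<Rightarrow> 'v) \<Rightarrow> ('v \<Rightarrow> bit) \<Rightarrow> nat \<Rightarrow> bool" where
  "elliptic scale Q r \<longleftrightarrow>
     (\<exists>(e :: nat \<Rightarrow> 'v) f x y.
        card (e ` {..<r-1} \<union> f ` {..<r-1} \<union> {x, y}) = 2*r \<and>
        is_basis scale (e ` {..<r-1} \<union> f ` {..<r-1} \<union> {x, y}) \<and>
        (\<forall>i<r-1. Q (e i) = 0 \<and> Q (f i) = 0) \<and>
        (\<forall>i<r-1. \<forall>j<r-1. assoc_bilin Q (e i) (e j) = 0 \<and> assoc_bilin Q (f i) (f j) = 0 \<and>
                      assoc_bilin Q (e i) (f j) = (if i = j then 1 else 0)) \<and>
        (\<forall>i<r-1. assoc_bilin Q (e i) x = 0 \<and> assoc_bilin Q (e i) y = 0 \<and>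
                  assoc_bilin Q (f i) x = 0 \<and> assoc_bilin Q (f i) y = 0) \<and>
        Q x = 1 \<and> Q y = 1 \<and> assoc_bilin Q x y = 1)"

end

theory Submission
  imports Defs
begin

declare add_bit_eq_xor[simp del] mult_bit_eq_and[simp del]

lemma bit_cases2: "(x::bit) = 0 \<or> x = 1" by (cases x) auto
lemma bit_xx[simp]: "(x::bit) + x = 0" using bit_cases2[of x] by auto
lemma bit_minus[simp]: "(x::bit) - y = x + y" using bit_cases2[of x] bit_cases2[of y] by auto
lemma bit_sq[simp]: "(x::bit)^2 = x" using bit_cases2[of x] by auto
lemma bit_xxy[simp]: "(x::bit) + (x + y) = y" by (metis add.assoc add_0 bit_xx)

locale qspace = vector_space scale for scale :: "bit \<Rightarrow> 'v::ab_group_add \<Rightarrow> 'v" +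
  fixes Q :: "'v \<Rightarrow> bit" assumes qf: "quadratic_form scale Q"
begin

abbreviation "B \<equiv> assoc_bilin Q"

lemma vv[simp]: "(x::'v) + x = 0"
proof -
  have "x + x = scale 1 x + scale 1 x" by simp
  also have "\<dots> = scale (1+1) x" by (simp only: scale_left_distrib)
  finally show ?thesis by simp
qed

lemma vneg[simp]: "- (x::'v) = x" by (metis add_right_imp_eq vv neg_eq_iff_add_eq_0)
lemma vminus[simp]: "(x::'v) - y = x + y" by (metis diff_conv_add_uminus vneg)
lemma vxxy[simp]: "(x::'v) + (x + y) = y" by (metis add.assoc add_0 vv)

lemma Q0[simp]: "Q 0 = 0"
  using qf unfolding quadratic_form_def by (metis scale_zero_left power_zero_numeral mult_zero_left)

lemma Q_add: "Q (u + w) = Q u + Q w + B u w"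
  unfolding assoc_bilin_def by (simp add: ac_simps)

lemma B_sym: "B u w = B w u" unfolding assoc_bilin_def by (simp add: ac_simps)

lemma B_addL[simp]: "B (u + w) z = B u z + B w z"
  using qf unfolding quadratic_form_def by blast
lemma B_addR[simp]: "B z (u + w) = B z u + B z w"
  using B_addL B_sym by metis
lemma B_self[simp]: "B u u = 0" unfolding assoc_bilin_def by simp
lemma B_0L[simp]: "B 0 u = 0" unfolding assoc_bilin_def by simp
lemma B_0R[simp]: "B u 0 = 0" unfolding assoc_bilin_def by simp

end

locale symb = qspace scale Q for scale :: "bit \<Rightarrow> 'v::ab_group_add \<Rightarrow> 'v" and Q +
  fixes v :: "nat \<Rightarrow> 'v" and r :: nat
  assumes Qv: "i < 2*r \<Longrightarrow> Q (v i) = 0"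
    and Bv: "i < 2*r \<Longrightarrow> j < 2*r \<Longrightarrow> i \<noteq> j \<Longrightarrow> B (v i) (v j) = 1"
begin

lemma Bv': "i < 2*r \<Longrightarrow> j < 2*r \<Longrightarrow> B (v i) (v j) = (if i = j then 0 else 1)"
  using Bv by auto

definition c :: "nat \<Rightarrow> 'v" where "c k = (\<Sum>i<2*k. v i)"

lemma c0[simp]: "c 0 = 0" by (simp add: c_def)
lemma cSuc: "c (Suc k) = c k + v (2*k) + v (2*k+1)"
  by (simp add: c_def)

lemma Bcv: "k \<le> r \<Longrightarrow> j < 2*r \<Longrightarrow> B (c k) (v j) = (if j < 2*k then 1 else 0)"
proof (induction k)
  case 0 then show ?case by simp
next
  case (Suc k)
  then show ?case by (auto simp: cSuc Bv' B_sym[of "v _" "v j"])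
qed

lemma Bcc: "k \<le> r \<Longrightarrow> l \<le> r \<Longrightarrow> B (c k) (c l) = 0"
proof (induction l)
  case 0 then show ?case by simp
next
  case (Suc l)
  then show ?case by (auto simp: cSuc Bcv)
qed

lemma Qc: "k \<le> r \<Longrightarrow> Q (c k) = (if even k then 0 else 1)"
proof (induction k)
  case 0 then show ?case by simp
next
  case (Suc k)
  then show ?case by (auto simp: cSuc Q_add Qv Bcv Bv')
qed

definition a where "a k = c k + v (2*k)"
definition b where "b k = c k + v (2*k+1)"

lemma Qa: "k < r \<Longrightarrow> Q (a k) = (if even k then 0 else 1)"
  by (simp add: a_def Q_add Qc Qv Bcv)
lemma Qb: "k < r \<Longrightarrow> Q (b k) = (if even k then 0 else 1)"
  by (simp add: b_def Q_add Qc Qv Bcv)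
lemma Baa: "k < r \<Longrightarrow> l < r \<Longrightarrow> B (a k) (a l) = 0"
  by (auto simp: a_def Bcc Bcv Bv' B_sym[of "v _" "c _"])
lemma Bbb: "k < r \<Longrightarrow> l < r \<Longrightarrow> B (b k) (b l) = 0"
  by (auto simp: b_def Bcc Bcv Bv' B_sym[of "v _" "c _"])
lemma Bab: "k < r \<Longrightarrow> l < r \<Longrightarrow> B (a k) (b l) = (if k = l then 1 else 0)"
  by (auto simp: a_def b_def Bcc Bcv Bv' B_sym[of "v _" "c _"])
lemma Bba: "k < r \<Longrightarrow> l < r \<Longrightarrow> B (b k) (a l) = (if k = l then 1 else 0)"
  using Bab B_sym by metis



definition pa where "pa q h = a (4*q+h)"
definition pb where "pb q h = b (4*q+h)"

lemma idx4: "(h::nat) < 4 \<Longrightarrow> d < 4 \<Longrightarrow> 4*q+h = 4*q'+d \<longleftrightarrow> q = q' \<and> h = d"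
  by presburger

lemma Qpa[simp]: "h < 4 \<Longrightarrow> 4*q+h < r \<Longrightarrow> Q (pa q h) = (if even h then 0 else 1)"
  by (simp add: pa_def Qa)
lemma Qpb[simp]: "h < 4 \<Longrightarrow> 4*q+h < r \<Longrightarrow> Q (pb q h) = (if even h then 0 else 1)"
  by (simp add: pb_def Qb)
lemma Bpapa[simp]: "4*q+h < r \<Longrightarrow> 4*q'+d < r \<Longrightarrow> B (pa q h) (pa q' d) = 0"
  by (simp add: pa_def Baa)
lemma Bpbpb[simp]: "4*q+h < r \<Longrightarrow> 4*q'+d < r \<Longrightarrow> B (pb q h) (pb q' d) = 0"
  by (simp add: pb_def Bbb)
lemma Bpapb[simp]: "h < 4 \<Longrightarrow> d < 4 \<Longrightarrow> 4*q+h < r \<Longrightarrow> 4*q'+d < r \<Longrightarrow>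
   B (pa q h) (pb q' d) = (if q = q' \<and> h = d then 1 else 0)"
  by (simp add: pa_def pb_def Bab idx4)
lemma Bpbpa[simp]: "h < 4 \<Longrightarrow> d < 4 \<Longrightarrow> 4*q+h < r \<Longrightarrow> 4*q'+d < r \<Longrightarrow>
   B (pb q h) (pa q' d) = (if q = q' \<and> h = d then 1 else 0)"
  by (simp add: pa_def pb_def Bba idx4)

definition E :: "nat \<Rightarrow> nat \<Rightarrow> 'v" where
 "E q s = (if s = 0 then pa q 0 else if s = 1 then (if 4*q+3 < r then pa q 1 + pa q 3 else pa q 2)
    else if s = 2 then pa q 2 else pb q 1 + pa q 3 + pb q 3)"
definition F :: "nat \<Rightarrow> nat \<Rightarrow> 'v" where
 "F q s = (if s = 0 then pb q 0 else if s = 1 then (if 4*q+3 < r then pa q 1 + pb q 3 else pb q 2)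
    else if s = 2 then pb q 2 else pa q 1 + pb q 1 + pa q 3 + pb q 3)"

definition good where "good m \<longleftrightarrow> m \<le> r \<and> (\<forall>q. 4*q+1 < m \<longrightarrow> 4*q+3 < r \<or> (4*q+2 = m \<and> m < r))"

lemma s4: "(s::nat) < 4 \<Longrightarrow> s = 0 \<or> s = 1 \<or> s = 2 \<or> s = 3" by auto

lemma QE: assumes "good m" "s < 4" "4*q+s < m" shows "Q (E q s) = 0" "Q (F q s) = 0"
proof -
  have "m \<le> r" and g: "4*q+1 < m \<Longrightarrow> 4*q+3 < r \<or> (4*q+2 = m \<and> m < r)" using assms(1) by (auto simp: good_def)
  from s4[OF assms(2)] have "Q (E q s) = 0 \<and> Q (F q s) = 0"
  proof (elim disjE)
    assume "s = 1" then show ?thesis using assms g \<open>m \<le> r\<close> by (auto simp: E_def F_def Q_add)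
  qed (use assms \<open>m \<le> r\<close> in \<open>auto simp: E_def F_def Q_add\<close>)
  then show "Q (E q s) = 0" "Q (F q s) = 0" by auto
qed


lemma BEF: assumes "good m" "s < 4" "t < 4" "4*q+s < m" "4*q'+t < m"
  shows "B (E q s) (E q' t) = 0 \<and> B (F q s) (F q' t) = 0 \<and> B (E q s) (F q' t) = (if q = q' \<and> s = t then 1 else 0)"
proof -
  have "m \<le> r" and g: "4*q+1 < m \<Longrightarrow> 4*q+3 < r \<or> (4*q+2 = m \<and> m < r)"
    and g': "4*q'+1 < m \<Longrightarrow> 4*q'+3 < r \<or> (4*q'+2 = m \<and> m < r)" using assms(1) by (auto simp: good_def)
  from s4[OF assms(2)] s4[OF assms(3)] show ?thesis
    apply (elim disjE)
    using assms g g' \<open>m \<le> r\<close> by (cases "q = q'"; auto simp: E_def F_def)+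
qed


lemma BEx: assumes "good m" "s < 4" "4*q+s < m" "4*n+1 < r" "m = 4*n+1 \<or> (m = 4*n+2 \<and> r = 4*n+3)"
  shows "B (E q s) (pa n 1) = 0 \<and> B (E q s) (pb n 1) = 0 \<and> B (F q s) (pa n 1) = 0 \<and> B (F q s) (pb n 1) = 0"
proof -
  have "m \<le> r" and g: "4*q+1 < m \<Longrightarrow> 4*q+3 < r \<or> (4*q+2 = m \<and> m < r)"
    using assms(1) by (auto simp: good_def)
  have qn: "q \<le> n" using assms(3,5) by linarith
  from s4[OF assms(2)] show ?thesis
  proof (elim disjE)
    assume "s = 0" then show ?thesis using assms(3,4) \<open>m \<le> r\<close> by (simp add: E_def F_def)
  next
    assume s: "s = 2"
    then have "q < n" using assms(3,5) by linarith
    then show ?thesis using s assms(3,4) \<open>m \<le> r\<close> by (simp add: E_def F_def)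
  next
    assume s: "s = 3"
    then have "q < n" using assms(3,5) by linarith
    then show ?thesis using s assms(3,4) \<open>m \<le> r\<close> by (simp add: E_def F_def)
  next
    assume s: "s = 1"
    show ?thesis
    proof (cases "q < n")
      case True
      then have "4*q+3 < r" using assms(4) by linarith
      then show ?thesis using True s assms(3,4) \<open>m \<le> r\<close> by (simp add: E_def F_def)
    next
      case False
      then have "q = n" "\<not> 4*n+3 < r" "4*n+2 < r" using qn s assms(3,5) by linarith+
      then show ?thesis using s assms(4) by (simp add: E_def F_def)
    qed
  qed
qed

lemma good_r: assumes "r mod 4 = 0 \<or> r mod 4 = 1" shows "good r"
proof -
  define n where "n = r div 4"
  have r: "r = 4*n + r mod 4" unfolding n_def by simp
  show ?thesis unfolding good_def
  proof (intro conjI allI impI)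
    fix q assume "4*q+1 < r"
    then have "q < n" using r assms by linarith
    then show "4*q+3 < r \<or> (4*q+2 = r \<and> r < r)" using r by linarith
  qed simp
qed

lemma good_r1: assumes "r mod 4 = 2 \<or> r mod 4 = 3" shows "good (r - 1)"
proof -
  define n where "n = r div 4"
  have r: "r = 4*n + r mod 4" unfolding n_def by simp
  show ?thesis unfolding good_def
  proof (intro conjI allI impI)
    fix q assume q: "4*q+1 < r - 1"
    show "4*q+3 < r \<or> (4*q+2 = r - 1 \<and> r - 1 < r)"
    proof (cases "q < n")
      case True then show ?thesis using r by linarith
    next
      case False then show ?thesis using r assms q by linarith
    qed
  qed simp
qed


lemma span_planes:
  assumes "good m" "r \<le> m+1" "\<And>q. 4*q < r \<Longrightarrow> 4*q < m" "\<And>q. 4*q+3 < r \<Longrightarrow> 4*q+3 < m"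
    and ES: "\<And>q s. s<4 \<Longrightarrow> 4*q+s<m \<Longrightarrow> E q s \<in> S \<and> F q s \<in> S"
    and X: "\<And>n. 4*n+1 < r \<Longrightarrow> \<not> 4*n+3 < r \<Longrightarrow> pa n 1 \<in> S \<and> pb n 1 \<in> S"
    and k: "k < r"
  shows "a k \<in> span S \<and> b k \<in> span S"
proof -
  define q where "q = k div 4"
  define h where "h = k mod 4"
  have kq: "k = 4*q+h" "h < 4" unfolding q_def h_def by auto
  have ab: "a k = pa q h" "b k = pb q h" using kq by (simp_all add: pa_def pb_def)
  have g: "4*q+1 < m \<Longrightarrow> 4*q+3 < r \<or> (4*q+2 = m \<and> m < r)" using assms(1) by (auto simp: good_def)
  have full: "pa q 1 \<in> span S \<and> pb q 1 \<in> span S \<and> pa q 3 \<in> span S \<and> pb q 3 \<in> span S"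
    if h3: "4*q+3 < r"
  proof -
    have m3: "4*q+3 < m" using assms(4) h3 by blast
    have m1: "4*q+1 < m" using m3 by linarith
    have e3: "pa q 1 = E q 3 + F q 3" by (simp add: E_def F_def ac_simps)
    have s1: "pa q 1 \<in> span S" unfolding e3 using ES[of 3 q] m3
      by (intro span_add span_base) auto
    have e1: "pa q 3 = E q 1 + pa q 1" "pb q 3 = F q 1 + pa q 1" using h3 by (simp_all add: E_def F_def ac_simps)
    have s3: "pa q 3 \<in> span S" "pb q 3 \<in> span S" unfolding e1 using ES[of 1 q] m1 s1
      by (auto intro!: span_add intro: span_base)
    have e4: "pb q 1 = E q 3 + pa q 3 + pb q 3" by (simp add: E_def F_def ac_simps)
    have "pb q 1 \<in> span S" unfolding e4 using ES[of 3 q] m3 s3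
      by (auto intro!: span_add intro: span_base)
    with s1 s3 show ?thesis by blast
  qed
  from s4[OF kq(2)] show ?thesis
  proof (elim disjE)
    assume h: "h = 0"
    then have "4*q < m" using assms(3) k kq by simp
    then show ?thesis using ES[of 0 q] h ab by (auto simp: E_def F_def intro: span_base)
  next
    assume h: "h = 1"
    show ?thesis
    proof (cases "4*q+3 < r")
      case True then show ?thesis using full h ab by simp
    next
      case False then show ?thesis using X[of q] h ab k kq by (auto intro: span_base)
    qed
  next
    assume h: "h = 3"
    then show ?thesis using full ab k kq by simp
  next
    assume h: "h = 2"
    show ?thesis
    proof (cases "4*q+2 < m")
      case True then show ?thesis using ES[of 2 q] h ab by (auto simp: E_def F_def intro: span_base)
    next
      case False
      then have "4*q+1 < m" "\<not> 4*q+3 < r" using k kq h assms(2) by linarith+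
      then show ?thesis using ES[of 1 q] h ab by (auto simp: E_def F_def intro: span_base)
    qed
  qed
qed

lemma span_c: assumes "\<And>k. k<r \<Longrightarrow> a k \<in> span S \<and> b k \<in> span S"
  shows "k \<le> r \<Longrightarrow> c k \<in> span S"
proof (induction k)
  case 0 then show ?case by (simp add: span_zero)
next
  case (Suc k)
  have "c (Suc k) = a k + b k + c k" by (simp add: cSuc a_def b_def ac_simps)
  then show ?case using Suc assms[of k] by (auto intro!: span_add)
qed

lemma span_v: assumes "\<And>k. k<r \<Longrightarrow> a k \<in> span S \<and> b k \<in> span S" and j: "j < 2*r"
  shows "v j \<in> span S"
proof -
  define k where "k = j div 2"
  have kr: "k < r" "k \<le> r" using j unfolding k_def by auto
  have "j = 2*k \<or> j = 2*k+1" unfolding k_def by auto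
  moreover have "v (2*k) = a k + c k" "v (2*k+1) = b k + c k" by (simp_all add: a_def b_def ac_simps)
  ultimately show ?thesis using assms(1)[OF kr(1)] span_c[OF assms(1) kr(2)] by (auto intro!: span_add)
qed


lemma basis_from_planes:
  assumes d: "dim (UNIV::'v set) = 2*r" and vb: "is_basis scale (v ` {..<2*r})"
    and fS: "finite S" and cS: "card S \<le> 2*r" and pl: "\<And>k. k<r \<Longrightarrow> a k \<in> span S \<and> b k \<in> span S"
  shows "card S = 2*r \<and> is_basis scale S"
proof -
  have "v ` {..<2*r} \<subseteq> span S" using span_v[OF pl] by auto
  then have "span (v ` {..<2*r}) \<subseteq> span S" by (simp add: span_minimal subspace_span)
  then have sp: "span S = UNIV" using vb by (auto simp: is_basis_def)
  interpret FD: finite_dimensional_vector_space scale "v ` {..<2*r}"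
    using vb by unfold_locales (auto simp: is_basis_def)
  have ind: "independent S" by (rule FD.card_le_dim_spanning[of S UNIV]) (use sp fS cS d in auto)
  have "dim (UNIV::'v set) \<le> card S" by (rule span_card_ge_dim) (use sp fS in auto)
  then show ?thesis using ind sp cS d by (auto simp: is_basis_def)
qed

lemma hyp_case:
  assumes d: "dim (UNIV::'v set) = 2*r" and vb: "is_basis scale (v ` {..<2*r})"
    and rm: "r mod 4 = 0 \<or> r mod 4 = 1"
  shows "hyperbolic scale Q r"
proof -
  define e where "e i = E (i div 4) (i mod 4)" for i
  define f where "f i = F (i div 4) (i mod 4)" for i
  define S where "S = e ` {..<r} \<union> f ` {..<r}"
  have gr: "good r" using good_r[OF rm] .
  have fS: "finite S" unfolding S_def by auto
  have "card S \<le> card (e ` {..<r}) + card (f ` {..<r})" unfolding S_def by (rule card_Un_le)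
  also have "\<dots> \<le> r + r" using card_image_le[of "{..<r}" e] card_image_le[of "{..<r}" f] by simp
  finally have cS: "card S \<le> 2*r" by simp
  have pl: "a k \<in> span S \<and> b k \<in> span S" if "k < r" for k
  proof (rule span_planes[OF gr])
    show "E q s \<in> S \<and> F q s \<in> S" if "s < 4" "4*q+s < r" for q s
    proof -
      have "e (4*q+s) = E q s" "f (4*q+s) = F q s" using that by (simp_all add: e_def f_def)
      then show ?thesis using that rev_image_eqI[of "4*q+s" _ "E q s" e] rev_image_eqI[of "4*q+s" _ "F q s" f]
        unfolding S_def by auto
    qed
    show "pa n 1 \<in> S \<and> pb n 1 \<in> S" if "4*n+1 < r" "\<not> 4*n+3 < r" for n
    proof -
      have False using that rm by presburger
      then show ?thesis ..
    qed
  qed (use that in auto)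
  have B1: "card S = 2*r \<and> is_basis scale S" by (rule basis_from_planes[OF d vb fS cS pl])
  have Q1: "Q (e i) = 0 \<and> Q (f i) = 0" if "i < r" for i
    using QE[OF gr, of "i mod 4" "i div 4"] that unfolding e_def f_def by auto
  have B2: "B (e i) (e j) = 0 \<and> B (f i) (f j) = 0 \<and> B (e i) (f j) = (if i = j then 1 else 0)"
    if "i < r" "j < r" for i j
  proof -
    have "i = j \<longleftrightarrow> i div 4 = j div 4 \<and> i mod 4 = j mod 4" by (metis div_mult_mod_eq)
    then show ?thesis using BEF[OF gr, of "i mod 4" "j mod 4" "i div 4" "j div 4"] that
      unfolding e_def f_def by auto
  qed
  show ?thesis unfolding hyperbolic_def
    apply (rule exI[where x=e], rule exI[where x=f])
    using B1 Q1 B2 unfolding S_def by simp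
qed

lemma ell_case:
  assumes d: "dim (UNIV::'v set) = 2*r" and vb: "is_basis scale (v ` {..<2*r})"
    and rm: "r mod 4 = 2 \<or> r mod 4 = 3"
  shows "elliptic scale Q r"
proof -
  define n where "n = r div 4"
  have rn: "r = 4*n+2 \<or> r = 4*n+3" unfolding n_def using rm by presburger
  define m where "m = r - 1"
  define e where "e i = E (i div 4) (i mod 4)" for i
  define f where "f i = F (i div 4) (i mod 4)" for i
  define x where "x = pa n 1"
  define y where "y = pb n 1"
  define S where "S = e ` {..<m} \<union> f ` {..<m} \<union> {x, y}"
  have gr: "good m" unfolding m_def using good_r1[OF rm] .
  have mn: "m = 4*n+1 \<or> (m = 4*n+2 \<and> r = 4*n+3)" "4*n+1 < r" using rn unfolding m_def by auto
  have fS: "finite S" unfolding S_def by auto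
  have "card S \<le> card (e ` {..<m} \<union> f ` {..<m}) + card {x, y}" unfolding S_def by (rule card_Un_le)
  also have "\<dots> \<le> card (e ` {..<m}) + card (f ` {..<m}) + 2"
    using card_Un_le[of "e ` {..<m}" "f ` {..<m}"] card_insert_le_m1[of 2 "{y}" x] by simp
  also have "\<dots> \<le> m + m + 2" using card_image_le[of "{..<m}" e] card_image_le[of "{..<m}" f] by simp
  also have "m + m + 2 = 2*r" using rn unfolding m_def by presburger
  finally have cS: "card S \<le> 2*r" .
  have pl: "a k \<in> span S \<and> b k \<in> span S" if "k < r" for k
  proof (rule span_planes[OF gr])
    show "E q s \<in> S \<and> F q s \<in> S" if "s < 4" "4*q+s < m" for q s
    proof -
      have "e (4*q+s) = E q s" "f (4*q+s) = F q s" using that by (simp_all add: e_def f_def)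
      then show ?thesis using that rev_image_eqI[of "4*q+s" _ "E q s" e] rev_image_eqI[of "4*q+s" _ "F q s" f]
        unfolding S_def by auto
    qed
    show "pa n' 1 \<in> S \<and> pb n' 1 \<in> S" if "4*n'+1 < r" "\<not> 4*n'+3 < r" for n'
    proof -
      have "n' = n" using that rn by presburger
      then show ?thesis unfolding S_def x_def y_def by auto
    qed
    show "r \<le> m + 1" unfolding m_def by simp
    show "4*q < m" if "4*q < r" for q using that rn unfolding m_def by presburger
    show "4*q+3 < m" if "4*q+3 < r" for q using that rn unfolding m_def by presburger
  qed (use that in auto)
  have B1: "card S = 2*r \<and> is_basis scale S" by (rule basis_from_planes[OF d vb fS cS pl])
  have mr: "m \<le> r" unfolding m_def by simp
  have Q1: "Q (e i) = 0 \<and> Q (f i) = 0" if "i < m" for i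
    using QE[OF gr, of "i mod 4" "i div 4"] that unfolding e_def f_def by auto
  have B2: "B (e i) (e j) = 0 \<and> B (f i) (f j) = 0 \<and> B (e i) (f j) = (if i = j then 1 else 0)"
    if "i < m" "j < m" for i j
  proof -
    have "i = j \<longleftrightarrow> i div 4 = j div 4 \<and> i mod 4 = j mod 4" by (metis div_mult_mod_eq)
    then show ?thesis using BEF[OF gr, of "i mod 4" "j mod 4" "i div 4" "j div 4"] that
      unfolding e_def f_def by auto
  qed
  have B3: "B (e i) x = 0 \<and> B (e i) y = 0 \<and> B (f i) x = 0 \<and> B (f i) y = 0" if "i < m" for i
    using BEx[OF gr, of "i mod 4" "i div 4" n] that mn unfolding e_def f_def x_def y_def by auto
  have Qxy: "Q x = 1" "Q y = 1" "B x y = 1" unfolding x_def y_def using mn(2) by auto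
  show ?thesis unfolding elliptic_def
    apply (rule exI[where x=e], rule exI[where x=f], rule exI[where x=x], rule exI[where x=y])
    using B1 Q1 B2 B3 Qxy unfolding S_def m_def by simp
qed

end

theorem lemma3p4:
  fixes scale :: "bit \<Rightarrow> 'v::ab_group_add \<Rightarrow> 'v"
    and Q :: "'v \<Rightarrow> bit"
    and r :: nat
  assumes "vector_space scale"
    and "vector_space.dim scale (UNIV :: 'v set) = 2 * r"
    and "r \<ge> 1"
    and "quadratic_form scale Q"
    and "nondegenerate Q"
    and "has_symmetric_basis scale Q r"
  shows "(r mod 4 = 0 \<or> r mod 4 = 1 \<longrightarrow> hyperbolic scale Q r) \<and>
         (r mod 4 = 2 \<or> r mod 4 = 3 \<longrightarrow> elliptic scale Q r)"
proof -
  obtain v :: "nat \<Rightarrow> 'v" where vb: "is_basis scale (v ` {..<2*r})"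
    and Qv: "\<forall>i<2*r. Q (v i) = 0"
    and Bv: "\<forall>i<2*r. \<forall>j<2*r. i \<noteq> j \<longrightarrow> assoc_bilin Q (v i) (v j) = 1"
    using assms(6) unfolding has_symmetric_basis_def by blast
  have "symb scale Q v r"
    unfolding symb_def symb_axioms_def qspace_def qspace_axioms_def using assms(1,4) Qv Bv by auto
  then interpret symb scale Q v r .
  show ?thesis using hyp_case[OF assms(2) vb] ell_case[OF assms(2) vb] by blast
qed

end
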